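(* Let $L$ be an $r\times m$ integer matrix. There is $K_L>0$ depending only on $L$ such that for every positive integer $p$ there exist elements $j_1/p,\ldots,j_K/p\in J(L,p)$ with $K\le K_L$ such that \[J(L,p)=\bigsqcup_{k=1}^{K}\big(j_k/p+(\Lambda\cap\ker_{\mathbb{T}}L)\big)\] (a disjoint union, with addition in $\mathbb{T}^m$).
   Context: $\mathbb{T}=\mathbb{R}/\mathbb{Z}$, and $\mathbb{T}^m$ is identified with $[0,1)^m$ with coordinatewise addition mod 1. $\ker_{\mathbb{T}}L=\{x\in\mathbb{T}^m:Lx=0\}$ with normalized Haar probability measure $\mu_L$. For a positive integer $p$, $\Lambda=\Lambda(p)=\{j/p: j\in\mathbb{Z}_p^m\}\le\mathbb{T}^m$, where for $j=(j(1),\ldots,j(m))$ with $j(i)\in\{0,\ldots,p-1\}$ we write $j/p=(j(1)/p,\ldots,j(m)/p)$. Define $J(L,p)=\{j/p\in\Lambda:\ \mu_L\big((j/p+[0,1/p)^m)\cap\ker_{\mathbb{T}}L\big)>0\}$. *)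

theory Defs
  imports "HOL-Analysis.Analysis"
begin

text \<open>The torus T^m is identified with [0,1)^m; points are real vectors with
  all coordinates in [0,1); addition is coordinatewise mod 1.\<close>

definition torus :: "(real^'m) set" where
  "torus = {x. \<forall>i. 0 \<le> x$i \<and> x$i < 1}"

definition tadd :: "real^'m \<Rightarrow> real^'m \<Rightarrow> real^'m" where
  "tadd x y = (\<chi> i. frac (x$i + y$i))"

text \<open>ker_T L = {x in T^m : L x = 0 in T^r}, i.e. every entry of L x is an integer.\<close>
definition kerT :: "int^'m^'r \<Rightarrow> (real^'m) set" where
  "kerT L = {x \<in> torus. \<forall>k. (\<Sum>i\<in>UNIV. of_int (L$k$i) * x$i) \<in> \<int>}"

definition haar_on :: "int^'m^'r \<Rightarrow> (real^'m) measure \<Rightarrow> bool" where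
  "haar_on L \<mu> \<longleftrightarrow>
     sets \<mu> = sets (restrict_space borel (kerT L)) \<and>
     emeasure \<mu> (space \<mu>) = 1 \<and>
     (\<forall>a\<in>kerT L. \<forall>A\<in>sets \<mu>. emeasure \<mu> (tadd a ` A) = emeasure \<mu> A)"

definition Lam :: "nat \<Rightarrow> (real^'m) set" where
  "Lam p = {x. \<forall>i. \<exists>j::nat. j < p \<and> x$i = real j / real p}"

definition cell :: "nat \<Rightarrow> real^'m \<Rightarrow> (real^'m) set" where
  "cell p x = {y. \<forall>i. x$i \<le> y$i \<and> y$i < x$i + 1 / real p}"

definition J :: "int^'m^'r \<Rightarrow> (real^'m) measure \<Rightarrow> nat \<Rightarrow> (real^'m) set" where
  "J L \<mu> p = {x \<in> Lam p. measure \<mu> (cell p x \<inter> kerT L) > 0}"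

end

theory Submission
  imports Defs
begin

definition Lf :: "int^'m^'r \<Rightarrow> real^'m \<Rightarrow> 'r \<Rightarrow> real" where
  "Lf L v k = (\<Sum>i\<in>UNIV. of_int (L$k$i) * v$i)"

lemma kerT_iff: "x \<in> kerT L \<longleftrightarrow> x \<in> torus \<and> (\<forall>k. Lf L x k \<in> \<int>)"
  by (simp add: kerT_def Lf_def)

lemma Lf_frac: "Lf L (\<chi> i. frac (a$i)) k - Lf L a k \<in> \<int>"
proof -
  have "Lf L (\<chi> i. frac (a$i)) k - Lf L a k = - (\<Sum>i\<in>UNIV. of_int (L$k$i * \<lfloor>a$i\<rfloor>))"
    by (simp add: Lf_def frac_def algebra_simps sum_subtractf)
  also have "\<dots> \<in> \<int>" by (intro Ints_minus Ints_sum) auto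
  finally show ?thesis .
qed

lemma Lf_add: "Lf L (x + y) k = Lf L x k + Lf L y k"
  by (simp add: Lf_def algebra_simps sum.distrib)

lemma Lf_tadd: "Lf L (tadd x y) k - (Lf L x k + Lf L y k) \<in> \<int>"
proof -
  have "tadd x y = (\<chi> i. frac ((x + y)$i))" by (simp add: tadd_def)
  thus ?thesis using Lf_frac[of L "x+y" k] by (simp add: Lf_add)
qed

lemma tadd_torus: "tadd x y \<in> torus"
  by (simp add: tadd_def torus_def frac_lt_1)

lemma tadd_ker: "x \<in> kerT L \<Longrightarrow> y \<in> kerT L \<Longrightarrow> tadd x y \<in> kerT L"
proof -
  assume a: "x \<in> kerT L" "y \<in> kerT L"
  have "Lf L (tadd x y) k \<in> \<int>" for k
  proof -
    have "Lf L (tadd x y) k = (Lf L (tadd x y) k - (Lf L x k + Lf L y k)) + (Lf L x k + Lf L y k)" by simp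
    also have "\<dots> \<in> \<int>" using Lf_tadd[of L x y k] a by (intro Ints_add) (auto simp: kerT_iff)
    finally show ?thesis .
  qed
  thus ?thesis by (simp add: kerT_iff tadd_torus)
qed

lemma frac_div_nat: "p > 0 \<Longrightarrow> frac (real n / real p) = real (n mod p) / real p"
proof -
  assume p: "p > 0"
  have "real n / real p - real (n mod p) / real p = real (n div p)"
  proof -
    have "real n = real p * real (n div p) + real (n mod p)"
      by (metis of_nat_add of_nat_mult div_mult_mod_eq mult.commute)
    thus ?thesis using p by (simp add: field_simps)
  qed
  moreover have "real (n mod p) / real p < 1" using p by simp
  ultimately show ?thesis by (simp add: frac_unique_iff)
qed

lemma tadd_Lam: "p > 0 \<Longrightarrow> x \<in> Lam p \<Longrightarrow> y \<in> Lam p \<Longrightarrow> tadd x y \<in> Lam p"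
proof -
  assume p: "p > 0" and x: "x \<in> Lam p" and y: "y \<in> Lam p"
  show ?thesis unfolding Lam_def
  proof
    show "\<forall>i. \<exists>j. j < p \<and> tadd x y $ i = real j / real p"
    proof
      fix i
      obtain a where a: "a < p" "x$i = real a / real p" using x by (auto simp: Lam_def)
      obtain b where b: "b < p" "y$i = real b / real p" using y by (auto simp: Lam_def)
      have "tadd x y $ i = frac (real (a+b) / real p)" using a b by (simp add: tadd_def add_divide_distrib)
      also have "\<dots> = real ((a+b) mod p) / real p" using frac_div_nat p by blast
      finally show "\<exists>j. j < p \<and> tadd x y $ i = real j / real p" using p by auto
    qed
  qed
qed

lemma Lam_torus: "p > 0 \<Longrightarrow> x \<in> Lam p \<Longrightarrow> x \<in> torus"
  unfolding torus_def
proof (intro CollectI allI)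
  fix i assume "p > 0" "x \<in> Lam p"
  then obtain j where "j < p" "x$i = real j / real p" by (auto simp: Lam_def)
  thus "0 \<le> x $ i \<and> x $ i < 1" by simp
qed

lemma tadd_comm: "tadd x y = tadd y x" by (simp add: tadd_def add.commute)

lemma tadd_zero: "x \<in> torus \<Longrightarrow> tadd x 0 = x"
  by (simp add: tadd_def torus_def vec_eq_iff)

lemma zero_Lam: "p > 0 \<Longrightarrow> 0 \<in> Lam p" by (auto simp: Lam_def)
lemma zero_ker: "0 \<in> kerT L" by (simp add: kerT_def torus_def)

definition phi :: "int^'m^'r \<Rightarrow> real^'m \<Rightarrow> 'r \<Rightarrow> real" where
  "phi L v = (\<lambda>k. frac (Lf L v k))"

lemma phi_tadd: "h \<in> kerT L \<Longrightarrow> phi L (tadd x h) = phi L x"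
proof
  fix k assume h: "h \<in> kerT L"
  have eq: "Lf L (tadd x h) k = (Lf L (tadd x h) k - (Lf L x k + Lf L h k)) + (Lf L h k + Lf L x k)" by simp
  have "frac (Lf L (tadd x h) k) = frac (Lf L h k + Lf L x k)"
    by (subst eq) (rule frac_add_int_left[OF Lf_tadd[of L x h k]])
  also have "\<dots> = frac (Lf L x k)" using h by (simp add: kerT_iff frac_add_int_left)
  finally show "phi L (tadd x h) k = phi L x k" by (simp add: phi_def)
qed

lemma Lf_diff: "Lf L (x - y) k = Lf L x k - Lf L y k"
  by (simp add: Lf_def algebra_simps sum_subtractf)

lemma coset_sub:
  assumes p: "p > 0" and x: "x \<in> Lam p" and x': "x' \<in> Lam p" and e: "phi L x = phi L x'"
  shows "tadd x ` (Lam p \<inter> kerT L) \<subseteq> tadd x' ` (Lam p \<inter> kerT L)"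
proof
  define d where "d = (\<chi> i. frac ((x - x')$i))"
  have dL: "d \<in> Lam p" unfolding Lam_def
  proof (intro CollectI allI)
    fix i
    obtain a where a: "a < p" "x$i = real a / real p" using x by (auto simp: Lam_def)
    obtain b where b: "b < p" "x'$i = real b / real p" using x' by (auto simp: Lam_def)
    have "(x - x')$i + 1 = real (a + (p - b)) / real p" using a b p by (simp add: field_simps)
    hence "d$i = frac (real (a + (p - b)) / real p)" unfolding d_def
      by (metis frac_1_eq vec_lambda_beta)
    also have "\<dots> = real ((a + (p - b)) mod p) / real p" using frac_div_nat p by blast
    finally show "\<exists>j. j < p \<and> d$i = real j / real p" using p by auto
  qed
  have dK: "d \<in> kerT L" unfolding kerT_iff
  proof
    show "d \<in> torus" by (simp add: d_def torus_def frac_lt_1)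
    show "\<forall>k. Lf L d k \<in> \<int>"
    proof
      fix k
      have "frac (Lf L x k) = frac (Lf L x' k)" using e by (metis phi_def)
      then obtain n where n: "Lf L x k = Lf L x' k + of_int n" by (elim frac_eqE)
      have "Lf L d k = (Lf L d k - Lf L (x - x') k) + of_int n" using n by (simp add: Lf_diff)
      also have "\<dots> \<in> \<int>" using Lf_frac[of L "x - x'" k] unfolding d_def by (intro Ints_add) auto
      finally show "Lf L d k \<in> \<int>" .
    qed
  qed
  fix z assume "z \<in> tadd x ` (Lam p \<inter> kerT L)"
  then obtain h where h: "h \<in> Lam p" "h \<in> kerT L" and z: "z = tadd x h" by auto
  have "tadd x' (tadd d h) = tadd x h"
  proof -
    have "frac (x'$i + frac (frac (x$i - x'$i) + h$i)) = frac (x$i + h$i)" for i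
    proof -
      have "frac (x'$i + frac (frac (x$i - x'$i) + h$i)) = frac (x'$i + (frac (x$i - x'$i) + h$i))"
        by (rule frac_add_simps(2))
      also have "\<dots> = frac (frac (x$i - x'$i) + (x'$i + h$i))" by (metis add.left_commute)
      also have "\<dots> = frac ((x$i - x'$i) + (x'$i + h$i))" by (rule frac_add_simps(1))
      also have "\<dots> = frac (x$i + h$i)" by simp
      finally show ?thesis .
    qed
    thus ?thesis by (simp add: tadd_def d_def vec_eq_iff)
  qed
  moreover have "tadd d h \<in> Lam p \<inter> kerT L" using tadd_Lam[OF p dL h(1)] tadd_ker[OF dK h(2)] by simp
  ultimately show "z \<in> tadd x' ` (Lam p \<inter> kerT L)" using z by (metis image_eqI)
qed

lemma frac_shift: "p > 0 \<Longrightarrow> 0 \<le> t \<Longrightarrow> t < 1 / real p \<Longrightarrow>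
   frac (real n / real p + t) = real (n mod p) / real p + t"
proof -
  assume p: "p > 0" and t: "0 \<le> t" "t < 1 / real p"
  have "real n = real p * real (n div p) + real (n mod p)"
    by (metis of_nat_add of_nat_mult div_mult_mod_eq mult.commute)
  hence "real n / real p + t - (real (n mod p) / real p + t) = real (n div p)"
    using p by (simp add: field_simps)
  moreover have "real (n mod p) / real p + t < 1"
  proof -
    have "n mod p + 1 \<le> p" using p by (metis Suc_eq_plus1 Suc_leI mod_less_divisor)
    hence "real (n mod p) + 1 \<le> real p" by linarith
    hence "(real (n mod p) + 1) / real p \<le> 1" using p by simp
    moreover have "real (n mod p) / real p + t < (real (n mod p) + 1) / real p"
      using t by (simp add: add_divide_distrib)
    ultimately show ?thesis by linarith
  qed
  ultimately show ?thesis using t by (simp add: frac_unique_iff)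
qed

lemma cell_tadd:
  assumes p: "p > 0" and x: "x \<in> Lam p" and h: "h \<in> Lam p" and y: "y \<in> cell p x"
  shows "tadd h y \<in> cell p (tadd x h)"
  unfolding cell_def
proof (intro CollectI allI)
  fix i
  obtain b where b: "b < p" "x$i = real b / real p" using x by (auto simp: Lam_def)
  obtain a where a: "a < p" "h$i = real a / real p" using h by (auto simp: Lam_def)
  define t where "t = y$i - x$i"
  have yi: "x$i \<le> y$i \<and> y$i < x$i + 1 / real p" using y by (simp add: cell_def)
  have t: "0 \<le> t" "t < 1 / real p" using yi unfolding t_def by linarith+
  have "tadd h y $ i = frac (real (a+b) / real p + t)" using a b
    by (simp add: tadd_def t_def add_divide_distrib)
  also have "\<dots> = real ((a+b) mod p) / real p + t" using frac_shift[OF p t] .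
  finally have 1: "tadd h y $ i = real ((a+b) mod p) / real p + t" .
  have "tadd x h $ i = frac (real (a+b) / real p)" using a b
    by (simp add: tadd_def add_divide_distrib add.commute)
  also have "\<dots> = real ((a+b) mod p) / real p" using frac_div_nat[OF p] .
  finally show "tadd x h $ i \<le> tadd h y $ i \<and> tadd h y $ i < tadd x h $ i + 1 / real p"
    using 1 t by simp
qed

lemma cell_borel: "cell p x \<in> sets borel"
proof -
  have "{y \<in> space borel. \<forall>i. x$i \<le> y$i \<and> y$i < x$i + 1 / real p} \<in> sets borel"
    by measurable
  thus ?thesis by (simp add: cell_def)
qed

lemma J_tadd:
  assumes hr: "haar_on L \<mu>" and p: "p > 0" and x: "x \<in> J L \<mu> p"
    and h: "h \<in> Lam p" "h \<in> kerT L"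
  shows "tadd x h \<in> J L \<mu> p"
proof -
  have sets: "sets \<mu> = sets (restrict_space borel (kerT L))" and sp: "emeasure \<mu> (space \<mu>) = 1"
    and inv: "\<And>a A. a \<in> kerT L \<Longrightarrow> A \<in> sets \<mu> \<Longrightarrow> emeasure \<mu> (tadd a ` A) = emeasure \<mu> A"
    using hr by (auto simp: haar_on_def)
  have meas: "cell p z \<inter> kerT L \<in> sets \<mu>" for z
    unfolding sets sets_restrict_space using cell_borel by blast
  have xL: "x \<in> Lam p" and pos: "measure \<mu> (cell p x \<inter> kerT L) > 0" using x by (auto simp: J_def)
  have sub: "tadd h ` (cell p x \<inter> kerT L) \<subseteq> cell p (tadd x h) \<inter> kerT L"
    using cell_tadd[OF p xL h(1)] tadd_ker[OF h(2)] by auto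
  have "emeasure \<mu> (cell p x \<inter> kerT L) \<noteq> 0" using pos by (auto simp: measure_def)
  hence "emeasure \<mu> (tadd h ` (cell p x \<inter> kerT L)) \<noteq> 0" using inv[OF h(2) meas] by simp
  hence ne: "emeasure \<mu> (cell p (tadd x h) \<inter> kerT L) \<noteq> 0"
    using emeasure_mono[OF sub meas] by (metis le_zero_eq)
  have "emeasure \<mu> (cell p (tadd x h) \<inter> kerT L) \<le> emeasure \<mu> (space \<mu>)"
    by (rule emeasure_mono[OF sets.sets_into_space[OF meas] sets.top])
  hence fin: "emeasure \<mu> (cell p (tadd x h) \<inter> kerT L) < top" using sp by (simp add: order_le_less_trans)
  have "measure \<mu> (cell p (tadd x h) \<inter> kerT L) > 0"
    using ne fin by (simp add: measure_def enn2real_positive_iff zero_less_iff_neq_zero)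
  moreover have "tadd x h \<in> Lam p" using tadd_Lam[OF p xL h(1)] .
  ultimately show ?thesis by (simp add: J_def)
qed

definition CL :: "int^'m^'r \<Rightarrow> int" where
  "CL L = (\<Sum>k\<in>UNIV. \<Sum>i\<in>UNIV. \<bar>L$k$i\<bar>)"

definition V :: "int^'m^'r \<Rightarrow> nat \<Rightarrow> ('r \<Rightarrow> real) set" where
  "V L p = (\<lambda>z k. frac (of_int (z k) / real p)) ` (\<Pi>\<^sub>E k\<in>UNIV. {- CL L..CL L})"

lemma phi_in_V:
  assumes p: "p > 0" and x: "x \<in> J L \<mu> p"
  shows "phi L x \<in> V L p"
proof -
  have xL: "x \<in> Lam p" and pos: "measure \<mu> (cell p x \<inter> kerT L) > 0" using x by (auto simp: J_def)
  have "cell p x \<inter> kerT L \<noteq> {}" using pos by auto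
  then obtain y where yc: "y \<in> cell p x" and yk: "y \<in> kerT L" by auto
  from xL have "\<forall>i. \<exists>j. j < p \<and> x$i = real j / real p" by (simp add: Lam_def)
  then obtain jf where jf: "\<And>i. x$i = real (jf i) / real p" by metis
  define w where "w k = real p * (Lf L x k - Lf L y k)" for k
  have wint: "w k \<in> \<int>" for k
  proof -
    have "real p * Lf L x k = (\<Sum>i\<in>UNIV. of_int (L$k$i) * real (jf i))"
      using p by (simp add: Lf_def jf sum_distrib_left)
    also have "\<dots> \<in> \<int>" by (intro Ints_sum Ints_mult) auto
    finally have 1: "real p * Lf L x k \<in> \<int>" .
    have 2: "real p * Lf L y k \<in> \<int>" using yk by (simp add: kerT_iff)
    show ?thesis unfolding w_def right_diff_distrib using 1 2 by (rule Ints_diff)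
  qed
  have wb: "\<bar>w k\<bar> \<le> of_int (CL L)" for k
  proof -
    have "\<bar>Lf L x k - Lf L y k\<bar> = \<bar>\<Sum>i\<in>UNIV. of_int (L$k$i) * (x$i - y$i)\<bar>"
      by (simp add: Lf_def algebra_simps sum_subtractf)
    also have "\<dots> \<le> (\<Sum>i\<in>UNIV. \<bar>of_int (L$k$i) * (x$i - y$i)\<bar>)" by (rule sum_abs)
    also have "\<dots> \<le> (\<Sum>i\<in>UNIV. \<bar>of_int (L$k$i)\<bar> * (1 / real p))"
    proof (rule sum_mono)
      fix i
      have "x$i \<le> y$i \<and> y$i < x$i + 1 / real p" using yc by (simp add: cell_def)
      hence "\<bar>x$i - y$i\<bar> \<le> 1 / real p" by linarith
      thus "\<bar>of_int (L$k$i) * (x$i - y$i)\<bar> \<le> \<bar>of_int (L$k$i)\<bar> * (1 / real p)"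
        using mult_left_mono[of "\<bar>x$i - y$i\<bar>" "1 / real p" "\<bar>of_int (L$k$i)\<bar>"] by (simp add: abs_mult)
    qed
    finally have "\<bar>Lf L x k - Lf L y k\<bar> \<le> (\<Sum>i\<in>UNIV. \<bar>of_int (L$k$i)\<bar>) / real p"
      by (simp add: sum_divide_distrib)
    hence "real p * \<bar>Lf L x k - Lf L y k\<bar> \<le> real p * ((\<Sum>i\<in>UNIV. \<bar>of_int (L$k$i)\<bar>) / real p)"
      by (rule mult_left_mono) simp
    hence "\<bar>w k\<bar> \<le> (\<Sum>i\<in>UNIV. \<bar>of_int (L$k$i)\<bar>)"
      using p by (simp add: w_def abs_mult)
    also have "\<dots> = of_int (\<Sum>i\<in>UNIV. \<bar>L$k$i\<bar>)" by simp
    also have "\<dots> \<le> of_int (CL L)" unfolding CL_def of_int_le_iff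
      by (rule member_le_sum) (auto intro: sum_nonneg)
    finally show ?thesis .
  qed
  define z where "z k = \<lfloor>w k\<rfloor>" for k
  have zw: "of_int (z k) = w k" for k using wint[of k] unfolding z_def by (metis Ints_cases floor_of_int)
  have "z \<in> (\<Pi>\<^sub>E k\<in>UNIV. {- CL L..CL L})"
  proof -
    have "\<bar>z k\<bar> \<le> CL L" for k using wb[of k] zw[of k] by (metis of_int_abs of_int_le_iff)
    hence "- CL L \<le> z k \<and> z k \<le> CL L" for k by (metis abs_le_iff minus_le_iff)
    thus ?thesis by auto
  qed
  moreover have "phi L x = (\<lambda>k. frac (of_int (z k) / real p))"
  proof
    fix k
    have e: "of_int (z k) / real p = Lf L x k + (- Lf L y k)" using zw[of k] p by (simp add: w_def)
    have i: "- Lf L y k \<in> \<int>" using yk by (simp add: kerT_iff)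
    show "phi L x k = frac (of_int (z k) / real p)"
      unfolding phi_def e by (simp only: frac_add_int_right[OF i])
  qed
  ultimately show ?thesis unfolding V_def by blast
qed

lemma card_V: fixes L :: "int^'m^'r" shows "card (V L p) \<le> nat (2 * CL L + 1) ^ CARD('r)" and "finite (V L p)"
proof -
  have "card (V L p) \<le> card (\<Pi>\<^sub>E k\<in>(UNIV::'r set). {- CL L..CL L})"
  proof -
    have "finite (\<Pi>\<^sub>E k\<in>(UNIV::'r set). {- CL L..CL L})" by (rule finite_PiE) auto
    thus ?thesis unfolding V_def by (rule card_image_le)
  qed
  also have "\<dots> = nat (2 * CL L + 1) ^ CARD('r)" by (simp add: card_PiE)
  finally show "card (V L p) \<le> nat (2 * CL L + 1) ^ CARD('r)" .
  show "finite (V L p)" unfolding V_def by (simp add: finite_PiE)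
qed

lemma partition_list:
  assumes fin: "finite (c ` S)" and cK: "card (c ` S) \<le> K"
    and mem: "\<And>x. x \<in> S \<Longrightarrow> x \<in> c x" and sub: "\<And>x. x \<in> S \<Longrightarrow> c x \<subseteq> S"
    and dis: "\<And>x y. x \<in> S \<Longrightarrow> y \<in> S \<Longrightarrow> c x \<inter> c y \<noteq> {} \<Longrightarrow> c x = c y"
  shows "\<exists>js. length js \<le> K \<and> set js \<subseteq> S \<and> S = (\<Union>k<length js. c (js!k)) \<and>
    (\<forall>k<length js. \<forall>l<length js. k \<noteq> l \<longrightarrow> c (js!k) \<inter> c (js!l) = {})"
proof -
  obtain xs where xs: "set xs = c ` S" "distinct xs" using finite_distinct_list[OF fin] by blast
  define r where "r C = (SOME x. x \<in> S \<and> c x = C)" for C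
  have r: "r C \<in> S \<and> c (r C) = C" if "C \<in> c ` S" for C
  proof -
    have "\<exists>x. x \<in> S \<and> c x = C" using that by blast
    hence "(SOME x. x \<in> S \<and> c x = C) \<in> S \<and> c (SOME x. x \<in> S \<and> c x = C) = C" by (rule someI_ex)
    thus ?thesis by (simp only: r_def)
  qed
  define js where "js = map r xs"
  have len: "length js = length xs" by (simp add: js_def)
  have cj: "c (js!k) = xs!k" if "k < length js" for k
  proof -
    have "xs!k \<in> set xs" using that len by simp
    hence "xs!k \<in> c ` S" using xs(1) by simp
    thus ?thesis using r[of "xs!k"] that len by (simp add: js_def)
  qed
  have f1: "length js \<le> K" using len distinct_card[OF xs(2)] xs(1) cK by simp
  have f2: "set js \<subseteq> S"
  proof
    fix x assume "x \<in> set js"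
    then obtain C where "C \<in> set xs" "x = r C" by (auto simp: js_def)
    thus "x \<in> S" using r xs(1) by blast
  qed
  have f3: "S = (\<Union>k<length js. c (js!k))"
  proof
    show "S \<subseteq> (\<Union>k<length js. c (js!k))"
    proof
      fix x assume x: "x \<in> S"
      then have "c x \<in> set xs" using xs(1) by auto
      then obtain k where k: "k < length xs" "xs!k = c x" by (metis in_set_conv_nth)
      thus "x \<in> (\<Union>k<length js. c (js!k))" using cj[of k] len mem[OF x] by auto
    qed
    show "(\<Union>k<length js. c (js!k)) \<subseteq> S"
    proof
      fix x assume "x \<in> (\<Union>k<length js. c (js!k))"
      then obtain k where k: "k < length js" "x \<in> c (js!k)" by auto
      have "js!k \<in> S" using \<open>set js \<subseteq> S\<close> nth_mem[OF k(1)] by blast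
      thus "x \<in> S" using sub k(2) by blast
    qed
  qed
   have f4: "\<forall>k<length js. \<forall>l<length js. k \<noteq> l \<longrightarrow> c (js!k) \<inter> c (js!l) = {}"
  proof (intro allI impI)
    fix k l assume kl: "k < length js" "l < length js" "k \<noteq> l"
    have "xs!k \<noteq> xs!l" using xs(2) kl len by (simp add: nth_eq_iff_index_eq)
    hence "c (js!k) \<noteq> c (js!l)" using cj kl by simp
    moreover have "js!k \<in> S" "js!l \<in> S" using \<open>set js \<subseteq> S\<close> nth_mem[OF kl(1)] nth_mem[OF kl(2)] by blast+
    ultimately show "c (js!k) \<inter> c (js!l) = {}" using dis by blast
  qed
  show ?thesis by (rule exI[of _ js], intro conjI f1 f2 f3 f4)
qed


theorem lemma2p4:
  fixes L :: "int^'m^'r"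
  shows "\<exists>KL::nat. KL > 0 \<and>
    (\<forall>\<mu>. haar_on L \<mu> \<longrightarrow>
      (\<forall>p::nat. p > 0 \<longrightarrow>
        (\<exists>js :: (real^'m) list.
           length js \<le> KL \<and> set js \<subseteq> J L \<mu> p \<and>
           J L \<mu> p = (\<Union>k<length js. tadd (js!k) ` (Lam p \<inter> kerT L)) \<and>
           (\<forall>k<length js. \<forall>l<length js. k \<noteq> l \<longrightarrow>
              tadd (js!k) ` (Lam p \<inter> kerT L) \<inter> tadd (js!l) ` (Lam p \<inter> kerT L) = {}))))"
proof (rule exI[of _ "nat (2 * CL L + 1) ^ CARD('r)"], intro conjI allI impI)
  define KL where "KL = nat (2 * CL L + 1) ^ CARD('r)"
  have "CL L \<ge> 0" unfolding CL_def by (intro sum_nonneg) auto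
  thus "nat (2 * CL L + 1) ^ CARD('r) > 0" by simp
  fix \<mu> p assume hr: "haar_on L \<mu>" and p: "(p::nat) > 0"
  define H where "H = Lam p \<inter> kerT L"
  define c where "c x = tadd x ` H" for x
  define JJ where "JJ = J L \<mu> p"
  have JL: "x \<in> Lam p" if "x \<in> JJ" for x using that by (simp add: JJ_def J_def)
  have mem: "x \<in> c x" if "x \<in> JJ" for x
  proof -
    have "tadd x 0 = x" using tadd_zero Lam_torus[OF p JL[OF that]] by blast
    moreover have "0 \<in> H" using zero_Lam[OF p] zero_ker[of L] by (simp add: H_def)
    ultimately show ?thesis unfolding c_def by (metis image_eqI)
  qed
  have sub: "c x \<subseteq> JJ" if "x \<in> JJ" for x
    using J_tadd[OF hr p] that unfolding c_def H_def JJ_def by auto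
  have same: "c x = c y" if "x \<in> JJ" "y \<in> JJ" "phi L x = phi L y" for x y
    using coset_sub[OF p JL[OF that(1)] JL[OF that(2)] that(3)]
      coset_sub[OF p JL[OF that(2)] JL[OF that(1)] that(3)[symmetric]]
    unfolding c_def H_def by blast
  have dis: "c x = c y" if a: "x \<in> JJ" "y \<in> JJ" "c x \<inter> c y \<noteq> {}" for x y
  proof -
    obtain z where "z \<in> c x" "z \<in> c y" using a(3) by blast
    then obtain h h' where "h \<in> kerT L" "h' \<in> kerT L" "z = tadd x h" "z = tadd y h'"
      unfolding c_def H_def by auto
    hence "phi L x = phi L y" using phi_tadd[of h L x] phi_tadd[of h' L y] by simp
    thus ?thesis using same a by blast
  qed
  define g where "g v = c (SOME x. x \<in> JJ \<and> phi L x = v)" for v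
  have cJ: "c ` JJ = g ` (phi L ` JJ)"
  proof -
    have "g (phi L x) = c x" if "x \<in> JJ" for x
    proof -
      have "\<exists>x'. x' \<in> JJ \<and> phi L x' = phi L x" using that by blast
      hence "(SOME x'. x' \<in> JJ \<and> phi L x' = phi L x) \<in> JJ \<and>
             phi L (SOME x'. x' \<in> JJ \<and> phi L x' = phi L x) = phi L x" by (rule someI_ex)
      hence "c (SOME x'. x' \<in> JJ \<and> phi L x' = phi L x) = c x" using same that by blast
      thus ?thesis unfolding g_def .
    qed
    hence "(\<lambda>x. g (phi L x)) ` JJ = c ` JJ" by (rule image_cong[OF refl])
    thus ?thesis by (simp add: image_image)
  qed
  have PV: "phi L ` JJ \<subseteq> V L p" using phi_in_V[OF p] unfolding JJ_def by blast
  have finPJ: "finite (phi L ` JJ)" using finite_subset[OF PV card_V(2)] .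
  have fin: "finite (c ` JJ)" unfolding cJ using finPJ by simp
  have "card (c ` JJ) \<le> card (phi L ` JJ)" unfolding cJ using finPJ by (rule card_image_le)
  also have "\<dots> \<le> card (V L p)" using PV card_V(2) by (rule card_mono[rotated])
  also have "\<dots> \<le> KL" unfolding KL_def by (rule card_V(1))
  finally have cK: "card (c ` JJ) \<le> KL" .
  have res: "\<exists>js. length js \<le> KL \<and> set js \<subseteq> JJ \<and> JJ = (\<Union>k<length js. c (js!k)) \<and>
    (\<forall>k<length js. \<forall>l<length js. k \<noteq> l \<longrightarrow> c (js!k) \<inter> c (js!l) = {})"
    by (rule partition_list[OF fin cK]) (rule mem, assumption, rule sub, assumption, rule dis, assumption+)
  show "\<exists>js :: (real^'m) list.
           length js \<le> nat (2 * CL L + 1) ^ CARD('r) \<and> set js \<subseteq> J L \<mu> p \<and>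
           J L \<mu> p = (\<Union>k<length js. tadd (js!k) ` (Lam p \<inter> kerT L)) \<and>
           (\<forall>k<length js. \<forall>l<length js. k \<noteq> l \<longrightarrow>
              tadd (js!k) ` (Lam p \<inter> kerT L) \<inter> tadd (js!l) ` (Lam p \<inter> kerT L) = {})"
    using res by (simp only: c_def H_def JJ_def KL_def)
qed

end
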